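(* For $R>1$ and a hyperbolic conjugacy class $[f]$ in $\mathrm{PSL}(2,\mathbb{Z})$, let $m_f(R)=\#\{[f']\in\mathcal{H}:\lambda(f')<R,\ l_{\mathcal{C}}(f')=l_{\mathcal{C}}(f)\}$. Then for every positive integer $k$, \[\lim_{R\to\infty}\frac{\#\{[f]\in\mathcal{H}:\lambda(f)<R,\ m_f(R)\ge k\}}{\#\{[f]\in\mathcal{H}:\lambda(f)<R\}}=1.\]
   Context: $\mathcal{H}$ denotes the set of conjugacy classes of hyperbolic elements of $\mathrm{PSL}(2,\mathbb{Z})$ (elements with $|\operatorname{tr}|>2$). For hyperbolic $f$, $\lambda(f)>1$ is its dilatation, the largest absolute value of an eigenvalue of a matrix representing $f$ (a conjugacy invariant). The Farey graph has vertex set $\mathbb{Q}\cup\{\infty\}$, $p/q$ and $r/s$ adjacent iff $|ps-qr|=1$, path metric $d_{\mathcal{C}}$ with unit edges; $f$ acts by $p/q\mapsto(ap+bq)/(cp+dq)$, and $l_{\mathcal{C}}(f)=\liminf_{j\to\infty}d_{\mathcal{C}}(v,f^jv)/j$ (for any vertex $v$) is its stable translation length, a conjugacy invariant. *)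

theory Defs
  imports "HOL-Analysis.Analysis"
begin

text \<open>2x2 integer matrices (a,b,c,d) representing [[a,b],[c,d]].\<close>
type_synonym imat = "int \<times> int \<times> int \<times> int"

definition SL2 :: "imat set" where
  "SL2 = {(a,b,c,d). a*d - b*c = 1}"

fun mmul :: "imat \<Rightarrow> imat \<Rightarrow> imat" where
  "mmul (a,b,c,d) (e,f,g,h) = (a*e + b*g, a*f + b*h, c*e + d*g, c*f + d*h)"

fun minv :: "imat \<Rightarrow> imat" where
  "minv (a,b,c,d) = (d, -b, -c, a)"

fun mneg :: "imat \<Rightarrow> imat" where
  "mneg (a,b,c,d) = (-a,-b,-c,-d)"

fun mtr :: "imat \<Rightarrow> int" where
  "mtr (a,b,c,d) = a + d"

text \<open>Conjugacy class in PSL(2,Z) of the element represented by M, as the set of all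
  SL(2,Z) matrices representing elements of that class.\<close>
definition psl_conjclass :: "imat \<Rightarrow> imat set" where
  "psl_conjclass M = {N. \<exists>g\<in>SL2. N = mmul (mmul g M) (minv g) \<or> N = mneg (mmul (mmul g M) (minv g))}"

definition hyperbolic :: "imat \<Rightarrow> bool" where
  "hyperbolic M \<longleftrightarrow> M \<in> SL2 \<and> \<bar>mtr M\<bar> > 2"

definition Hyp :: "imat set set" where
  "Hyp = {psl_conjclass M | M. hyperbolic M}"

fun is_eigenvalue :: "imat \<Rightarrow> complex \<Rightarrow> bool" where
  "is_eigenvalue (a,b,c,d) x \<longleftrightarrow>
     (\<exists>v1 v2::complex. (v1,v2) \<noteq> (0,0) \<and>
        of_int a * v1 + of_int b * v2 = x * v1 \<and> of_int c * v1 + of_int d * v2 = x * v2)"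

definition dilat :: "imat \<Rightarrow> real" where
  "dilat M = Sup {cmod x | x. is_eigenvalue M x}"

text \<open>Farey graph: vertices Q \<union> {\<infinity>}, represented as rat option (None = \<infinity>).\<close>
type_synonym fvert = "rat option"

definition fcoords :: "fvert \<Rightarrow> int \<times> int" where
  "fcoords v = (case v of None \<Rightarrow> (1, 0) | Some r \<Rightarrow> quotient_of r)"

definition fvert_of :: "int \<times> int \<Rightarrow> fvert" where
  "fvert_of pq = (if snd pq = 0 then None else Some (Fract (fst pq) (snd pq)))"

definition farey_adj :: "fvert \<Rightarrow> fvert \<Rightarrow> bool" where
  "farey_adj v w = (\<bar>fst (fcoords v) * snd (fcoords w) - snd (fcoords v) * fst (fcoords w)\<bar> = 1)"

definition farey_dist :: "fvert \<Rightarrow> fvert \<Rightarrow> nat" where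
  "farey_dist v w = (LEAST n. \<exists>p :: nat \<Rightarrow> fvert. p 0 = v \<and> p n = w \<and>
                        (\<forall>i<n. farey_adj (p i) (p (Suc i))))"

fun farey_act :: "imat \<Rightarrow> fvert \<Rightarrow> fvert" where
  "farey_act (a,b,c,d) v = fvert_of (a * fst (fcoords v) + b * snd (fcoords v), c * fst (fcoords v) + d * snd (fcoords v))"

definition transl_len :: "imat \<Rightarrow> ereal" where
  "transl_len M = liminf (\<lambda>j::nat. ereal (real (farey_dist None ((farey_act M ^^ j) None)) / real j))"

definition cdilat :: "imat set \<Rightarrow> real" where
  "cdilat C = dilat (SOME M. M \<in> C)"

definition ctransl :: "imat set \<Rightarrow> ereal" where
  "ctransl C = transl_len (SOME M. M \<in> C)"

definition mcount :: "imat set \<Rightarrow> real \<Rightarrow> nat" where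
  "mcount C R = card {C' \<in> Hyp. cdilat C' < R \<and> ctransl C' = ctransl C}"

end

theory Submission
  imports Defs "HOL-Real_Asymp.Real_Asymp"
begin


definition I2 :: imat where "I2 = (1,0,0,1)"
definition mconj :: "imat \<Rightarrow> imat \<Rightarrow> imat" where "mconj g M = mmul (mmul g M) (minv g)"

lemma mmul_assoc: "mmul (mmul A B) C = mmul A (mmul B C)"
  by (cases A; cases B; cases C) (simp add: algebra_simps)

lemma SL2_iff: "(a,b,c,d) \<in> SL2 \<longleftrightarrow> a*d - b*c = 1" by (simp add: SL2_def)

fun mdet :: "imat \<Rightarrow> int" where "mdet (a,b,c,d) = a*d - b*c"
lemma SL2_mdet: "A \<in> SL2 \<longleftrightarrow> mdet A = 1" by (cases A) (simp add: SL2_def)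
lemma mdet_mmul: "mdet (mmul A B) = mdet A * mdet B"
  proof -
  obtain a b c d where A: "A = (a,b,c,d)" by (cases A)
  obtain e f h i where B: "B = (e,f,h,i)" by (cases B)
  show ?thesis unfolding A B by (simp; algebra)
qed
lemma mmul_SL2: "A \<in> SL2 \<Longrightarrow> B \<in> SL2 \<Longrightarrow> mmul A B \<in> SL2"
  by (simp add: SL2_mdet mdet_mmul)

lemma minv_SL2: "A \<in> SL2 \<Longrightarrow> minv A \<in> SL2"
  by (cases A) (simp add: SL2_def algebra_simps)

lemma I2_SL2: "I2 \<in> SL2" by (simp add: I2_def SL2_def)

lemma mmul_I2[simp]: "mmul I2 A = A" "mmul A I2 = A"
  by (cases A, simp add: I2_def)+

lemma mmul_minv: "A \<in> SL2 \<Longrightarrow> mmul A (minv A) = I2"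
  by (cases A) (simp add: SL2_def I2_def algebra_simps)
lemma minv_mmul: "A \<in> SL2 \<Longrightarrow> mmul (minv A) A = I2"
  by (cases A) (simp add: SL2_def I2_def algebra_simps)

lemma minv_minv[simp]: "minv (minv A) = A" by (cases A) simp
lemma minv_mmul_distrib: "minv (mmul A B) = mmul (minv B) (minv A)"
  by (cases A; cases B) (simp add: algebra_simps)

lemma mneg_mneg[simp]: "mneg (mneg A) = A" by (cases A) simp
lemma mmul_mneg[simp]: "mmul (mneg A) B = mneg (mmul A B)" "mmul A (mneg B) = mneg (mmul A B)"
  by (cases A; cases B; simp)+
lemma mneg_SL2: "A \<in> SL2 \<Longrightarrow> mneg A \<in> SL2" by (cases A) (simp add: SL2_def)
lemma mtr_mneg[simp]: "mtr (mneg A) = - mtr A" by (cases A) simp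

lemma conj_SL2: "g \<in> SL2 \<Longrightarrow> M \<in> SL2 \<Longrightarrow> mconj g M \<in> SL2"
  by (simp add: mconj_def mmul_SL2 minv_SL2)

lemma mtr_conj: "g \<in> SL2 \<Longrightarrow> mtr (mconj g M) = mtr M"
proof -
  obtain a b c d where g: "g = (a,b,c,d)" by (cases g)
  obtain e f h i where M: "M = (e,f,h,i)" by (cases M)
  assume "g \<in> SL2" then have "a*d-b*c = 1" by (simp add: g SL2_def)
  then show ?thesis unfolding g M mconj_def by (simp; algebra)
qed

lemma conj_conj: "mconj g (mconj h M) = mconj (mmul g h) M"
  by (simp add: mconj_def mmul_assoc minv_mmul_distrib)

lemma conj_I2[simp]: "mconj I2 M = M" by (cases M) (simp add: mconj_def I2_def)

lemma conj_inv: "g \<in> SL2 \<Longrightarrow> mconj (minv g) (mconj g M) = M"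
  by (simp add: conj_conj minv_mmul) 

lemma conj_mneg: "mconj g (mneg M) = mneg (mconj g M)" by (simp add: mconj_def)

lemma psl_conjclass_iff: "N \<in> psl_conjclass M \<longleftrightarrow> (\<exists>g\<in>SL2. N = mconj g M \<or> N = mneg (mconj g M))"
  by (simp add: psl_conjclass_def mconj_def)

lemma psl_refl: "M \<in> psl_conjclass M"
  unfolding psl_conjclass_iff using I2_SL2 by force

lemma psl_sym: "N \<in> psl_conjclass M \<Longrightarrow> M \<in> psl_conjclass N"
  unfolding psl_conjclass_iff
  by (metis conj_inv conj_mneg minv_SL2 mneg_mneg)

lemma psl_trans: "N \<in> psl_conjclass M \<Longrightarrow> P \<in> psl_conjclass N \<Longrightarrow> P \<in> psl_conjclass M"
  unfolding psl_conjclass_iff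
  by (metis conj_conj conj_mneg mmul_SL2 mneg_mneg)

lemma psl_class_eq: "N \<in> psl_conjclass M \<Longrightarrow> psl_conjclass N = psl_conjclass M"
  by (meson psl_sym psl_trans subsetI subset_antisym)

lemma psl_SL2: "M \<in> SL2 \<Longrightarrow> N \<in> psl_conjclass M \<Longrightarrow> N \<in> SL2"
  unfolding psl_conjclass_iff by (metis conj_SL2 mneg_SL2)

lemma psl_tr: "N \<in> psl_conjclass M \<Longrightarrow> \<bar>mtr N\<bar> = \<bar>mtr M\<bar>"
  unfolding psl_conjclass_iff by (metis abs_minus mtr_conj mtr_mneg)

lemma psl_hyp: "hyperbolic M \<Longrightarrow> N \<in> psl_conjclass M \<Longrightarrow> hyperbolic N"
  unfolding hyperbolic_def using psl_SL2 psl_tr by metis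


lemma near_mult: fixes x m :: int assumes "m > 0" shows "\<exists>q. \<bar>x - q*(2*m)\<bar> \<le> m"
proof -
  define r where "r = x mod (2*m)"
  define q where "q = x div (2*m)"
  have x: "x = q*(2*m) + r" using div_mult_mod_eq[of x "2*m"] by (simp add: r_def q_def)
  have r: "0 \<le> r" "r < 2*m" using assms by (auto simp: r_def)
  show ?thesis
  proof (cases "r \<le> m")
    case True then show ?thesis using r x by (intro exI[of _ q]) auto
  next
    case False then show ?thesis using r x by (intro exI[of _ "q+1"]) (auto simp: algebra_simps)
  qed
qed

lemma mconj_T: "mconj (1,n,0,1) (a,b,c,d) = (a+n*c, b + n*d - n*a - n*n*c, c, d - n*c)"
  by (simp add: mconj_def; simp add: algebra_simps)
lemma mconj_S: "mconj (0,-1,1,0) (a,b,c,d) = (d, -c, -b, a)"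
  by (simp add: mconj_def)

lemma hyp_entries: assumes "hyperbolic (a,b,c,d)" shows "b \<noteq> 0" "c \<noteq> 0"
proof -
  have det: "a*d - b*c = 1" and t: "\<bar>a+d\<bar> > 2" using assms by (auto simp: hyperbolic_def SL2_def)
  { assume "b = 0 \<or> c = 0"
    then have "a*d = 1" using det by auto
    then have "(a = 1 \<and> d = 1) \<or> (a = -1 \<and> d = -1)" by (simp add: zmult_eq_1_iff)
    then have False using t by auto }
  then show "b \<noteq> 0" "c \<noteq> 0" by auto
qed

lemma reduce:
  assumes hyp: "hyperbolic M"
  shows "\<exists>a b c d. (a,b,c,d) \<in> psl_conjclass M \<and> a > 0 \<and> b > 0 \<and> c > 0 \<and> d > 0 \<and>
            a + d = \<bar>mtr M\<bar> \<and> a*d - b*c = 1 \<and> c \<le> \<bar>mtr M\<bar>^2 \<and> b \<le> \<bar>mtr M\<bar>^2"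
proof -
  define t where "t = \<bar>mtr M\<bar>"
  define M0 where "M0 = (if mtr M > 0 then M else mneg M)"
  have M0c: "M0 \<in> psl_conjclass M" unfolding M0_def psl_conjclass_iff
    by (rule bexI[of _ I2]) (auto simp: I2_SL2)
  have M0t: "mtr M0 = t" using hyp by (auto simp: M0_def t_def hyperbolic_def)
  have M0S: "M0 \<in> SL2" using hyp by (auto simp: M0_def hyperbolic_def mneg_SL2)
  have t3: "t \<ge> 3" using hyp by (auto simp: t_def hyperbolic_def)
  define cc :: "imat \<Rightarrow> nat" where "cc N = nat \<bar>fst (snd (snd N))\<bar>" for N
  define n0 where "n0 = (LEAST n. \<exists>g\<in>SL2. n = cc (mconj g M0))"
  have "\<exists>g\<in>SL2. n0 = cc (mconj g M0)"
    unfolding n0_def by (rule LeastI[of _ "cc (mconj I2 M0)"]) (use I2_SL2 in blast)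
  then obtain g where g: "g \<in> SL2" "n0 = cc (mconj g M0)" by blast
  have minc: "cc (mconj h (mconj g M0)) \<ge> n0" if "h \<in> SL2" for h
    unfolding n0_def conj_conj by (rule Least_le) (use that g mmul_SL2 in blast)
  obtain a b c d where N: "mconj g M0 = (a,b,c,d)" by (cases "mconj g M0")
  have NS: "(a,b,c,d) \<in> SL2" using N conj_SL2[OF g(1) M0S] by simp
  have Nt: "a + d = t" using N mtr_conj[OF g(1), of M0] M0t by simp
  have Nhyp: "hyperbolic (a,b,c,d)" using NS Nt t3 by (simp add: hyperbolic_def)
  have c0: "c \<noteq> 0" using hyp_entries[OF Nhyp] by simp
  obtain q where q: "\<bar>(a-d) - q*(2*\<bar>c\<bar>)\<bar> \<le> \<bar>c\<bar>" using near_mult[of "\<bar>c\<bar>"] c0 by auto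
  define n where "n = - q * sgn c"
  have nc: "n*c = - q*\<bar>c\<bar>" unfolding n_def by (simp add: abs_sgn mult.assoc)
  define Tn :: imat where "Tn = (1,n,0,1)"
  have TS: "Tn \<in> SL2" by (simp add: Tn_def SL2_def)
  define a' b' d' where "a' = a+n*c" and "b' = b + n*d - n*a - n*n*c" and "d' = d - n*c"
  have N': "mconj Tn (a,b,c,d) = (a',b',c,d')" by (simp add: Tn_def mconj_T a'_def b'_def d'_def)
  have N'S: "(a',b',c,d') \<in> SL2" using conj_SL2[OF TS NS] N' by simp
  then have det: "a'*d' - b'*c = 1" by (simp add: SL2_def)
  have tr': "a' + d' = t" using Nt by (simp add: a'_def d'_def)
  have ad: "\<bar>a' - d'\<bar> \<le> \<bar>c\<bar>" using q nc by (simp add: a'_def d'_def algebra_simps)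
  define Sm :: imat where "Sm = (0,-1,1,0)"
  have SS: "Sm \<in> SL2" by (simp add: Sm_def SL2_def)
  have "cc (mconj (mmul Sm Tn) (mconj g M0)) \<ge> n0" using minc mmul_SL2[OF SS TS] by blast
  then have "nat \<bar>b'\<bar> \<ge> nat \<bar>c\<bar>"
    using g(2) N N' by (simp add: conj_conj[symmetric] Sm_def mconj_S cc_def)
  then have bc: "\<bar>b'\<bar> \<ge> \<bar>c\<bar>" by simp
  have key: "t^2 - 4 = (a'-d')^2 + 4*b'*c" using det tr'[symmetric] by (simp add: power2_eq_square algebra_simps)
  have sq1: "(a'-d')^2 \<le> c^2" using abs_le_square_iff[of "a'-d'" c] ad by simp
  have "b'*c \<noteq> 0" using hyp_entries[of a' b' c d'] N'S tr' t3 by (simp add: hyperbolic_def)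
  moreover have "\<not> b'*c < 0"
  proof
    assume neg: "b'*c < 0"
    have "c^2 \<le> \<bar>b'\<bar>*\<bar>c\<bar>"
    proof -
      have "c^2 = \<bar>c\<bar>*\<bar>c\<bar>" by (simp add: power2_eq_square)
      also have "\<dots> \<le> \<bar>b'\<bar>*\<bar>c\<bar>" using bc by (intro mult_right_mono) auto
      finally show ?thesis .
    qed
    also have "\<dots> = - (b'*c)" using neg by (simp add: abs_mult[symmetric])
    finally have "t^2 - 4 \<le> 3*(b'*c)" using key sq1 by linarith
    moreover have "t^2 \<ge> 9" using t3 power_mono[of 3 t 2] by simp
    ultimately show False using neg by linarith
  qed
  ultimately have bcpos: "b'*c > 0" by linarith
  have "(a'-d')^2 \<ge> 0" by simp
  then have bct: "b'*c < t^2" using key bcpos by linarith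
  have "c^2 \<le> \<bar>b'\<bar>*\<bar>c\<bar>"
    proof -
      have "c^2 = \<bar>c\<bar>*\<bar>c\<bar>" by (simp add: power2_eq_square)
      also have "\<dots> \<le> \<bar>b'\<bar>*\<bar>c\<bar>" using bc by (intro mult_right_mono) auto
      finally show ?thesis .
    qed
  also have "\<dots> = b'*c" using bcpos by (simp add: abs_mult[symmetric])
  finally have c2: "c^2 < t^2" using bct by linarith
  have c1: "1 \<le> \<bar>c\<bar>" using c0 by (cases "c > 0") auto
  have "\<bar>c\<bar> * 1 \<le> \<bar>c\<bar> * \<bar>c\<bar>" using c1 by (intro mult_left_mono) auto
  then have "\<bar>c\<bar> \<le> \<bar>c\<bar> * \<bar>c\<bar>" by simp
  then have cbound: "\<bar>c\<bar> \<le> t^2" using c2 by (simp add: power2_eq_square)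
  have "\<bar>b'\<bar> * 1 \<le> \<bar>b'\<bar> * \<bar>c\<bar>" using c1 by (intro mult_left_mono) auto
  then have "\<bar>b'\<bar> \<le> \<bar>b'\<bar> * \<bar>c\<bar>" by simp
  also have "\<dots> = b'*c" using bcpos by (simp add: abs_mult[symmetric])
  finally have bbound: "\<bar>b'\<bar> \<le> t^2" using bct by linarith
  have adpos: "a'*d' > 0" using det bcpos by linarith
  have apos: "a' > 0" and dpos: "d' > 0" using adpos tr' t3 unfolding zero_less_mult_iff by linarith+
  have class1: "(a',b',c,d') \<in> psl_conjclass M"
  proof -
    have "(a',b',c,d') \<in> psl_conjclass (a,b,c,d)" unfolding psl_conjclass_iff
      using TS by (intro bexI[of _ Tn]) (simp_all add: N')
    moreover have "(a,b,c,d) \<in> psl_conjclass M0" unfolding psl_conjclass_iff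
      using g(1) by (intro bexI[of _ g]) (simp_all add: N)
    ultimately show ?thesis using M0c psl_trans by blast
  qed
  show ?thesis
  proof (cases "c > 0")
    case True
    then have bp: "b' > 0" using bcpos by (simp add: zero_less_mult_iff)
    have "c \<le> t^2" using cbound True by simp
    moreover have "b' \<le> t^2" using bbound by simp
    ultimately have "(a',b',c,d') \<in> psl_conjclass M \<and> a' > 0 \<and> b' > 0 \<and> c > 0 \<and> d' > 0 \<and>
            a' + d' = \<bar>mtr M\<bar> \<and> a'*d' - b'*c = 1 \<and> c \<le> \<bar>mtr M\<bar>^2 \<and> b' \<le> \<bar>mtr M\<bar>^2"
      using class1 True bp apos dpos tr' det unfolding t_def by simp
    then show ?thesis by blast
  next
    case False
    then have cn: "c < 0" using c0 by simp
    then have bn: "b' < 0" using bcpos by (simp add: zero_less_mult_iff)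
    have "(d', -c, -b', a') \<in> psl_conjclass (a',b',c,d')" unfolding psl_conjclass_iff
      using SS by (intro bexI[of _ Sm]) (simp_all add: Sm_def mconj_S)
    then have cl: "(d', -c, -b', a') \<in> psl_conjclass M" using class1 psl_trans by blast
    have "-c \<le> t^2" using cbound cn by simp
    moreover have "-b' \<le> t^2" using bbound bn by simp
    moreover have "d' + a' = t" using tr' by simp
    moreover have "d'*a' - (-c)*(-b') = 1" using det by (simp add: mult.commute)
    ultimately have "(d', -c, -b', a') \<in> psl_conjclass M \<and> d' > 0 \<and> -c > 0 \<and> -b' > 0 \<and> a' > 0 \<and>
            d' + a' = \<bar>mtr M\<bar> \<and> d'*a' - (-c)*(-b') = 1 \<and> -b' \<le> \<bar>mtr M\<bar>^2 \<and> -c \<le> \<bar>mtr M\<bar>^2"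
      using cl cn bn apos dpos unfolding t_def by simp
    then show ?thesis by blast
  qed
qed


lemma eig_iff:
  fixes a b c d :: int and x :: complex
  assumes det: "a*d - b*c = 1" and b0: "b \<noteq> 0"
  shows "is_eigenvalue (a,b,c,d) x \<longleftrightarrow> x^2 - of_int (a+d) * x + 1 = 0"
proof
  assume "is_eigenvalue (a,b,c,d) x"
  then obtain v1 v2 where nz: "(v1,v2) \<noteq> (0,0)" and e1: "of_int a * v1 + of_int b * v2 = x * v1"
      and e2: "of_int c * v1 + of_int d * v2 = x * v2" by auto
  define D where "D = (of_int a - x) * (of_int d - x) - of_int b * of_int c"
  have "D * v1 = (of_int d - x) * ((of_int a - x)* v1 + of_int b* v2) - of_int b * (of_int c* v1 + (of_int d - x)* v2)"
    by (simp add: D_def algebra_simps)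
  also have "\<dots> = 0" using e1 e2 by (simp add: algebra_simps)
  finally have "D * v1 = 0" .
  moreover have "D * v2 = (of_int a - x) * (of_int c* v1 + (of_int d - x)* v2) - of_int c * ((of_int a - x)* v1 + of_int b* v2)"
    by (simp add: D_def algebra_simps)
  moreover have "\<dots> = 0" using e1 e2 by (simp add: algebra_simps)
  ultimately have "D = 0" using nz by auto
  moreover have "of_int (a*d - b*c) = (1::complex)" using det by simp
  ultimately show "x^2 - of_int (a+d) * x + 1 = 0" unfolding D_def
    by (simp add: power2_eq_square algebra_simps)
next
  assume q: "x^2 - of_int (a+d) * x + 1 = 0"
  have dc: "of_int a * of_int d - of_int b * of_int c = (1::complex)"
    using det by (metis of_int_1 of_int_diff of_int_mult)
  show "is_eigenvalue (a,b,c,d) x"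
    unfolding is_eigenvalue.simps
  proof (intro exI conjI)
    show "(of_int b :: complex, x - of_int a) \<noteq> (0, 0)" using b0 by simp
    show "of_int a * of_int b + of_int b * (x - of_int a) = x * (of_int b :: complex)"
      by (simp add: algebra_simps)
    have "x * (x - (of_int a::complex)) - (of_int c * of_int b + of_int d * (x - of_int a))
       = (x^2 - of_int (a+d) * x + 1) - (1 - (of_int a * of_int d - of_int b * of_int c))"
      by (simp add: power2_eq_square algebra_simps)
    also have "\<dots> = 0" using q dc by simp
    finally show "of_int c * of_int b + of_int d * (x - of_int a) = x * (x - (of_int a::complex))"
      by simp
  qed
qed

lemma dilat_hyp:
  assumes "hyperbolic M"
  shows "dilat M = (\<bar>mtr M\<bar> + sqrt ((mtr M)^2 - 4)) / 2"
proof -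
  obtain a b c d where M: "M = (a,b,c,d)" by (cases M)
  have det: "a*d - b*c = 1" and tt: "\<bar>a+d\<bar> > 2" using assms by (auto simp: M hyperbolic_def SL2_def)
  have b0: "b \<noteq> 0"
  proof
    assume "b = 0" then have "a*d = 1" using det by simp
    then have "(a = 1 \<and> d = 1) \<or> (a = -1 \<and> d = -1)" by (simp add: zmult_eq_1_iff)
    then show False using tt by auto
  qed
  define t :: real where "t = of_int (a+d)"
  define s where "s = sqrt (t^2 - 4)"
  have "(3::int)^2 \<le> \<bar>a+d\<bar>^2" using tt by (intro power_mono) auto
  then have "(a+d)^2 \<ge> 9" by simp
  then have "real_of_int ((a+d)^2) \<ge> 9" by linarith
  then have t2: "t^2 > 4" unfolding t_def by simp
  have "t^2 - 4 \<ge> 0" using t2 by linarith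
  then have s2: "s^2 = t^2 - 4" unfolding s_def by (rule real_sqrt_pow2)
  have s0: "s \<ge> 0" using t2 by (simp add: s_def)
  define r1 r2 where "r1 = (t + s)/2" and "r2 = (t - s)/2"
  have "r1 + r2 = t" unfolding r1_def r2_def by (simp add: field_simps)
  then have sum: "of_real r1 + of_real r2 = (of_int (a+d) :: complex)"
    by (metis of_real_add of_real_of_int_eq t_def)
  have "r1 * r2 = (t^2 - s^2)/4" unfolding r1_def r2_def by (simp add: power2_eq_square algebra_simps)
  then have "r1 * r2 = 1" using s2 by simp
  then have prod: "of_real r1 * of_real r2 = (1::complex)" by (metis of_real_1 of_real_mult)
  have fac: "x^2 - of_int (a+d) * x + 1 = (x - of_real r1) * (x - of_real r2)" for x :: complex
  proof -
    have "(x - of_real r1) * (x - of_real r2) = x^2 - (of_real r1 + of_real r2) * x + of_real r1 * of_real r2"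
      by (simp add: power2_eq_square algebra_simps)
    also have "\<dots> = x^2 - of_int (a+d) * x + 1" by (simp only: sum prod)
    finally show ?thesis by simp
  qed
  have "{cmod x | x. is_eigenvalue M x} = {cmod x | x. x = of_real r1 \<or> x = of_real r2}"
    unfolding M eig_iff[OF det b0] fac by simp
  also have "\<dots> = {cmod (complex_of_real r1), cmod (complex_of_real r2)}" by blast
  also have "\<dots> = {\<bar>r1\<bar>, \<bar>r2\<bar>}" by simp
  finally have E: "{cmod x | x. is_eigenvalue M x} = {\<bar>r1\<bar>, \<bar>r2\<bar>}" .
  have "max \<bar>r1\<bar> \<bar>r2\<bar> = (\<bar>t\<bar> + s)/2" using s0 unfolding r1_def r2_def by (simp add: max_def abs_if field_simps)
  then have "Sup {\<bar>r1\<bar>, \<bar>r2\<bar>} = (\<bar>t\<bar> + s)/2" by (subst cSup_eq_Max) auto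
  then show ?thesis unfolding dilat_def E by (simp add: M t_def s_def)
qed

lemma dilat_bounds:
  assumes "hyperbolic M"
  shows "\<bar>mtr M\<bar> - 1 < dilat M" "dilat M < \<bar>mtr M\<bar>"
proof -
  define t :: real where "t = \<bar>mtr M\<bar>"
  have t3: "t \<ge> 3" using assms by (auto simp: hyperbolic_def t_def)
  have sq: "(mtr M)^2 = t^2" by (simp add: t_def)
  have d: "dilat M = (t + sqrt (t^2 - 4))/2" using dilat_hyp[OF assms] sq by (simp add: t_def)
  have "sqrt (t^2 - 4) > t - 2"
  proof -
    have "(t-2)^2 < t^2 - 4" using t3 by (simp add: power2_eq_square algebra_simps)
    then show ?thesis by (rule real_less_rsqrt)
  qed
  moreover have "sqrt (t^2 - 4) < sqrt (t^2)" by (rule real_sqrt_less_mono) simp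
  then have "sqrt (t^2 - 4) < t" using t3 by simp
  ultimately show "\<bar>mtr M\<bar> - 1 < dilat M" "dilat M < \<bar>mtr M\<bar>" using d t_def by auto
qed


fun mapp :: "imat \<Rightarrow> int \<times> int \<Rightarrow> int \<times> int" where
  "mapp (a,b,c,d) (p,q) = (a*p+b*q, c*p+d*q)"
fun det2 :: "int \<times> int \<Rightarrow> int \<times> int \<Rightarrow> int" where
  "det2 (p,q) (r,s) = p* s - q*r"
definition prim :: "int \<times> int \<Rightarrow> bool" where "prim x \<longleftrightarrow> coprime (fst x) (snd x)"

lemma farey_adj_det: "farey_adj v w \<longleftrightarrow> \<bar>det2 (fcoords v) (fcoords w)\<bar> = 1"
  by (cases "fcoords v"; cases "fcoords w") (simp add: farey_adj_def)

lemma farey_act_mapp: "farey_act M v = fvert_of (mapp M (fcoords v))"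
  by (cases M; cases "fcoords v") simp

lemma fcoords_None[simp]: "fcoords None = (1,0)" by (simp add: fcoords_def)
lemma fcoords_Some: "fcoords (Some r) = quotient_of r" by (simp add: fcoords_def)

lemma fcoords_prim: "prim (fcoords v)"
proof (cases v)
  case None then show ?thesis by (simp add: prim_def)
next
  case (Some r) then show ?thesis
    by (cases "quotient_of r") (simp add: prim_def fcoords_def quotient_of_coprime)
qed

lemma fcoords_snd: "snd (fcoords v) \<ge> 0"
proof (cases v)
  case None then show ?thesis by simp
next
  case (Some r) then show ?thesis
    using quotient_of_denom_pos'[of r] by (simp add: fcoords_def)
qed

lemma fvert_of_fcoords[simp]: "fvert_of (fcoords v) = v"
proof (cases v)
  case None then show ?thesis by (simp add: fvert_of_def)
next
  case (Some r)
  obtain p q where pq: "quotient_of r = (p,q)" by (cases "quotient_of r")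
  have "q > 0" using quotient_of_denom_pos[OF pq] .
  moreover have "r = Fract p q" using quotient_of_div[OF pq] by (simp add: Fract_of_int_quotient)
  ultimately show ?thesis using Some pq by (simp add: fcoords_def fvert_of_def)
qed

lemma fvert_of_neg: "fvert_of (-p, -q) = fvert_of (p, q)"
proof -
  have "Fract (-p) (-q) = Fract p q" using mult_rat_cancel[of "-1" p q] by simp
  then show ?thesis by (simp add: fvert_of_def)
qed

lemma fvert_of_scale: "k \<noteq> 0 \<Longrightarrow> fvert_of (k*p, k*q) = fvert_of (p, q)"
  using mult_rat_cancel[of k p q] by (simp add: fvert_of_def)

lemma fcoords_fvert_of:
  assumes "prim (p,q)"
  shows "fcoords (fvert_of (p,q)) = (p,q) \<or> fcoords (fvert_of (p,q)) = (-p,-q)"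
proof -
  have cp: "coprime p q" using assms by (simp add: prim_def)
  have g: "gcd p q = 1" using cp by simp
  show ?thesis
  proof (cases "q = 0")
    case True
    then have "\<bar>p\<bar> = 1" using cp by simp
    then show ?thesis using True by (auto simp: fvert_of_def abs_if split: if_splits)
  next
    case False
    have "quotient_of (Fract p q) = Rat.normalize (p,q)" by (rule quotient_of_Fract)
    moreover have "Rat.normalize (p,q) = (p,q) \<or> Rat.normalize (p,q) = (-p,-q)"
      using g False by (auto simp: normalize_def Let_def)
    ultimately show ?thesis using False by (simp add: fvert_of_def fcoords_def)
  qed
qed

lemma mapp_mmul: "mapp (mmul A B) x = mapp A (mapp B x)"
  by (cases A; cases B; cases x) (simp add: algebra_simps)

lemma mapp_neg: "mapp M (-p,-q) = (- fst (mapp M (p,q)), - snd (mapp M (p,q)))"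
  by (cases M) (simp add: algebra_simps)

lemma mapp_I2[simp]: "mapp I2 x = x" by (cases x) (simp add: I2_def)

lemma mapp_mneg: "mapp (mneg M) x = (- fst (mapp M x), - snd (mapp M x))"
  by (cases M; cases x) simp

lemma mapp_prim: assumes "M \<in> SL2" "prim x" shows "prim (mapp M x)"
proof -
  obtain a b c d where M: "M = (a,b,c,d)" by (cases M)
  obtain p q where x: "x = (p,q)" by (cases x)
  have det: "a*d - b*c = 1" using assms(1) by (simp add: M SL2_def)
  have cp: "coprime p q" using assms(2) by (simp add: x prim_def)
  have "coprime (a*p+b*q) (c*p+d*q)"
  proof (rule coprimeI)
    fix e assume e1: "e dvd a*p+b*q" and e2: "e dvd c*p+d*q"
    have "d*(a*p+b*q) - b*(c*p+d*q) = (a*d-b*c)*p" by (simp add: algebra_simps)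
    then have "p = d*(a*p+b*q) - b*(c*p+d*q)" using det by simp
    moreover have "e dvd d*(a*p+b*q) - b*(c*p+d*q)" by (intro dvd_diff dvd_mult e1 e2)
    ultimately have "e dvd p" by simp
    have "a*(c*p+d*q) - c*(a*p+b*q) = (a*d-b*c)*q" by (simp add: algebra_simps)
    then have "q = a*(c*p+d*q) - c*(a*p+b*q)" using det by simp
    moreover have "e dvd a*(c*p+d*q) - c*(a*p+b*q)" by (intro dvd_diff dvd_mult e1 e2)
    ultimately have "e dvd q" by simp
    show "is_unit e" using cp coprime_common_divisor \<open>e dvd p\<close> \<open>e dvd q\<close> by blast
  qed
  then show ?thesis by (simp add: M x prim_def)
qed

lemma det2_mapp: assumes "M \<in> SL2" shows "det2 (mapp M x) (mapp M y) = det2 x y"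
proof -
  obtain a b c d where M: "M = (a,b,c,d)" by (cases M)
  have det: "a*d - b*c = 1" using assms by (simp add: M SL2_def)
  obtain p q where x: "x = (p,q)" by (cases x)
  obtain r s where y: "y = (r,s)" by (cases y)
  have "det2 (mapp M x) (mapp M y) = (a*d - b*c) * (p* s - q*r)"
    by (simp add: M x y algebra_simps)
  then show ?thesis using det by (simp add: x y)
qed

lemma fcoords_act:
  assumes "M \<in> SL2"
  shows "fcoords (farey_act M v) = mapp M (fcoords v) \<or>
         fcoords (farey_act M v) = (- fst (mapp M (fcoords v)), - snd (mapp M (fcoords v)))"
proof -
  have "prim (mapp M (fcoords v))" using mapp_prim[OF assms fcoords_prim] .
  then show ?thesis unfolding farey_act_mapp
    using fcoords_fvert_of[of "fst (mapp M (fcoords v))" "snd (mapp M (fcoords v))"] by simp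
qed

lemma farey_act_comp:
  assumes "B \<in> SL2"
  shows "farey_act A (farey_act B v) = farey_act (mmul A B) v"
proof -
  obtain p q where pq: "mapp B (fcoords v) = (p,q)" by (cases "mapp B (fcoords v)")
  have "fcoords (farey_act B v) = (p,q) \<or> fcoords (farey_act B v) = (-p,-q)"
    using fcoords_act[OF assms, of v] pq by simp
  then show ?thesis
    unfolding farey_act_mapp[of A] farey_act_mapp[of "mmul A B"] mapp_mmul pq
    by (auto simp: mapp_neg fvert_of_neg)
qed

lemma farey_act_I2[simp]: "farey_act I2 v = v"
  by (simp add: farey_act_mapp)

lemma farey_act_mneg: "farey_act (mneg M) v = farey_act M v"
proof -
  obtain p q where pq: "mapp M (fcoords v) = (p,q)" by (cases "mapp M (fcoords v)")
  show ?thesis unfolding farey_act_mapp mapp_mneg pq by (simp add: fvert_of_neg)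
qed

lemma farey_act_inv[simp]: "M \<in> SL2 \<Longrightarrow> farey_act (minv M) (farey_act M v) = v"
  by (simp add: farey_act_comp minv_mmul)
lemma farey_act_inv2[simp]: "M \<in> SL2 \<Longrightarrow> farey_act M (farey_act (minv M) v) = v"
  by (simp add: farey_act_comp mmul_minv minv_SL2)

lemma det2_neg: "det2 (-p,-q) y = - det2 (p,q) y" "det2 x (-r,-s) = - det2 x (r,s)"
  by (cases y, simp, cases x, simp)

lemma adj_act: assumes "M \<in> SL2" "farey_adj v w" shows "farey_adj (farey_act M v) (farey_act M w)"
proof -
  obtain p q where pq: "mapp M (fcoords v) = (p,q)" by (cases "mapp M (fcoords v)")
  obtain r s where rs: "mapp M (fcoords w) = (r,s)" by (cases "mapp M (fcoords w)")
  have d: "\<bar>det2 (p,q) (r,s)\<bar> = 1"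
    using assms(2) det2_mapp[OF assms(1), of "fcoords v" "fcoords w"] unfolding pq rs farey_adj_det by simp
  have "fcoords (farey_act M v) = (p,q) \<or> fcoords (farey_act M v) = (-p,-q)"
    using fcoords_act[OF assms(1), of v] pq by simp
  moreover have "fcoords (farey_act M w) = (r,s) \<or> fcoords (farey_act M w) = (-r,-s)"
    using fcoords_act[OF assms(1), of w] rs by simp
  ultimately show ?thesis using d unfolding farey_adj_det
    by (auto simp del: det2.simps simp: det2_neg)
qed

lemma adj_sym: "farey_adj v w \<Longrightarrow> farey_adj w v"
  unfolding farey_adj_def by (simp add: abs_minus_commute algebra_simps)


definition fpath :: "nat \<Rightarrow> fvert \<Rightarrow> fvert \<Rightarrow> bool" where
  "fpath n v w \<longleftrightarrow> (\<exists>p. p 0 = v \<and> p n = w \<and> (\<forall>i<n. farey_adj (p i) (p (Suc i))))"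

lemma farey_dist_fpath: "farey_dist v w = (LEAST n. fpath n v w)"
  by (simp add: farey_dist_def fpath_def)

lemma fpath_refl: "fpath 0 v v" by (auto simp: fpath_def)

lemma fpath_adj: "farey_adj v w \<Longrightarrow> fpath 1 v w"
  unfolding fpath_def by (rule exI[of _ "\<lambda>i. if i = 0 then v else w"]) auto

lemma fpath_trans: assumes "fpath n u v" "fpath m v w" shows "fpath (n+m) u w"
proof -
  obtain p where p: "p 0 = u" "p n = v" "\<forall>i<n. farey_adj (p i) (p (Suc i))" using assms(1) fpath_def by auto
  obtain q where q: "q 0 = v" "q m = w" "\<forall>i<m. farey_adj (q i) (q (Suc i))" using assms(2) fpath_def by auto
  define r where "r i = (if i \<le> n then p i else q (i - n))" for i
  have "r 0 = u" "r (n+m) = w" using p q by (auto simp: r_def)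
  moreover have "farey_adj (r i) (r (Suc i))" if "i < n+m" for i
  proof (cases "i < n")
    case True then show ?thesis using p by (auto simp: r_def)
  next
    case False
    then have "Suc i - n = Suc (i - n)" by auto
    then show ?thesis using False q that p(2) by (auto simp: r_def)
  qed
  ultimately show ?thesis unfolding fpath_def by blast
qed

lemma fpath_sym: assumes "fpath n v w" shows "fpath n w v"
proof -
  obtain p where p: "p 0 = v" "p n = w" "\<forall>i<n. farey_adj (p i) (p (Suc i))" using assms fpath_def by auto
  define r where "r i = p (n - i)" for i
  have "r 0 = w" "r n = v" using p by (auto simp: r_def)
  moreover have "farey_adj (r i) (r (Suc i))" if "i < n" for i
  proof -
    have "farey_adj (p (n - Suc i)) (p (Suc (n - Suc i)))" using p(3) that by auto
    moreover have "Suc (n - Suc i) = n - i" using that by auto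
    ultimately show ?thesis unfolding r_def using adj_sym by auto
  qed
  ultimately show ?thesis unfolding fpath_def by blast
qed

lemma fpath_act: assumes "M \<in> SL2" "fpath n v w" shows "fpath n (farey_act M v) (farey_act M w)"
proof -
  obtain p where p: "p 0 = v" "p n = w" "\<forall>i<n. farey_adj (p i) (p (Suc i))" using assms(2) fpath_def by auto
  show ?thesis unfolding fpath_def
    by (rule exI[of _ "\<lambda>i. farey_act M (p i)"]) (use p adj_act[OF assms(1)] in auto)
qed

lemma fcoords_fvert_pos: assumes "prim (p,q)" "q > 0" shows "fcoords (fvert_of (p,q)) = (p,q)"
  using fcoords_fvert_of[OF assms(1)] fcoords_snd[of "fvert_of (p,q)"] assms(2) by auto

lemma prim_of_det: assumes "p* s - q*r = 1 \<or> p* s - q*r = -1" shows "prim (r,s)"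
proof -
  have "coprime r s"
  proof (rule coprimeI)
    fix e assume "e dvd r" "e dvd s"
    then have "e dvd p* s - q*r" by (intro dvd_diff dvd_mult)
    then have "e dvd 1" using assms by (auto simp: dvd_minus_iff)
    then show "is_unit e" by simp
  qed
  then show ?thesis by (simp add: prim_def)
qed

lemma log_path:
  fixes q :: nat
  shows "q \<ge> 1 \<Longrightarrow> prim (p, int q) \<Longrightarrow> \<exists>n. fpath n None (fvert_of (p, int q)) \<and> 2^n \<le> 2*q"
proof (induction q arbitrary: p rule: less_induct)
  case (less q)
  show ?case
  proof (cases "q = 1")
    case True
    have "fcoords (fvert_of (p, 1)) = (p, 1)" using fcoords_fvert_pos[of p 1] by (simp add: prim_def)
    then have "farey_adj None (fvert_of (p, int q))" using True by (simp add: farey_adj_def)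
    then show ?thesis using True fpath_adj by (intro exI[of _ 1]) auto
  next
    case False
    then have q2: "q \<ge> 2" using less.prems by auto
    have cp: "coprime p (int q)" using less.prems by (simp add: prim_def)
    obtain u v where uv: "u * p + v * int q = 1" using bezout_int[of p "int q"] cp by auto
    define s where "s = u mod int q"
    have s0: "0 \<le> s" "s < int q" using q2 by (auto simp: s_def)
    have ps: "p * s mod int q = 1"
    proof -
      have "p * s mod int q = (u * p) mod int q" by (simp add: s_def mod_mult_right_eq mult.commute)
      also have "u * p = 1 - v * int q" using uv by simp
      also have "(1 - v * int q) mod int q = 1 mod int q" by (simp add: mod_diff_eq[symmetric])
      also have "\<dots> = 1" using q2 by simp
      finally show ?thesis .
    qed
    have sne: "s \<noteq> 0" using ps q2 by auto
    define r where "r = (p * s) div int q"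
    have prs: "p * s - int q * r = 1" using ps div_mult_mod_eq[of "p* s" "int q"] by (simp add: r_def algebra_simps)
    define k1 where "k1 = nat s"
    define k2 where "k2 = q - k1"
    have k1: "1 \<le> k1" "k1 < q" using s0 sne by (auto simp: k1_def)
    have k2: "1 \<le> k2" "k2 < q" "int k2 = int q - s" using k1 s0 by (auto simp: k2_def k1_def)
    have det1: "p * int k1 - int q * r = 1" using prs s0 by (simp add: k1_def)
    have "p * int k2 = p * int q - p * s" using k2(3) by (simp add: right_diff_distrib)
    then have det2': "p * int k2 - int q * (p - r) = -1" using prs by (simp add: algebra_simps)
    have pr1: "prim (r, int k1)" using prim_of_det[of p "int k1" "int q" r] det1 by simp
    have pr2: "prim (p - r, int k2)" using prim_of_det[of p "int k2" "int q" "p - r"] det2' by simp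
    have prq: "prim (p, int q)" using less.prems by simp
    have adj1: "farey_adj (fvert_of (r, int k1)) (fvert_of (p, int q))"
      using fcoords_fvert_pos[OF pr1] fcoords_fvert_pos[OF prq] k1 q2 det1
      by (simp add: farey_adj_def algebra_simps)
    have fc2: "fcoords (fvert_of (p - r, int k2)) = (p - r, int k2)" using fcoords_fvert_pos[OF pr2] k2 by simp
    have fcq: "fcoords (fvert_of (p, int q)) = (p, int q)" using fcoords_fvert_pos[OF prq] q2 by simp
    have "(p - r) * int q - int k2 * p = 1" using det2' by (simp add: algebra_simps)
    then have adj2: "farey_adj (fvert_of (p - r, int k2)) (fvert_of (p, int q))"
      unfolding farey_adj_def fc2 fcq by simp
    show ?thesis
    proof (cases "2 * k1 \<le> q")
      case True
      obtain n where n: "fpath n None (fvert_of (r, int k1))" "2^n \<le> 2*k1"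
        using less.IH[OF k1(2) k1(1) pr1] by auto
      have "fpath (n+1) None (fvert_of (p, int q))" using fpath_trans[OF n(1) fpath_adj[OF adj1]] .
      moreover have "2^(n+1) \<le> 2*q" using n(2) True by simp
      ultimately show ?thesis by blast
    next
      case False
      then have "2 * k2 \<le> q" using k2_def k1 by auto
      obtain n where n: "fpath n None (fvert_of (p - r, int k2))" "2^n \<le> 2*k2"
        using less.IH[OF k2(2) k2(1) pr2] by auto
      have "fpath (n+1) None (fvert_of (p, int q))" using fpath_trans[OF n(1) fpath_adj[OF adj2]] .
      moreover have "2^(n+1) \<le> 2*q" using n(2) \<open>2 * k2 \<le> q\<close> by simp
      ultimately show ?thesis by blast
    qed
  qed
qed

lemma conn_None: "\<exists>n. fpath n None v"
proof (cases v)
  case None then show ?thesis using fpath_refl by blast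
next
  case (Some x)
  obtain p q where pq: "fcoords v = (p,q)" by (cases "fcoords v")
  have "q > 0" using pq Some quotient_of_denom_pos by (simp add: fcoords_def)
  moreover have "prim (p,q)" using fcoords_prim[of v] pq by simp
  moreover have "fvert_of (p,q) = v" using fvert_of_fcoords[of v] pq by simp
  moreover have "nat q \<ge> 1" "int (nat q) = q" using \<open>q > 0\<close> by auto
  ultimately show ?thesis using log_path[of "nat q" p] by auto
qed

lemma conn: "\<exists>n. fpath n v w"
proof -
  obtain n m where "fpath n None v" "fpath m None w" using conn_None by blast
  then show ?thesis using fpath_trans fpath_sym by blast
qed

lemma dist_le: "fpath n v w \<Longrightarrow> farey_dist v w \<le> n"
  unfolding farey_dist_fpath by (rule Least_le)

lemma dist_path: "fpath (farey_dist v w) v w"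
  unfolding farey_dist_fpath using conn by (rule LeastI_ex)

lemma dist_refl[simp]: "farey_dist v v = 0"
  using dist_le[OF fpath_refl[of v]] by simp

lemma dist_sym: "farey_dist v w = farey_dist w v"
  using dist_le[OF fpath_sym[OF dist_path[of v w]]] dist_le[OF fpath_sym[OF dist_path[of w v]]] by simp

lemma dist_tri: "farey_dist u w \<le> farey_dist u v + farey_dist v w"
  using dist_le[OF fpath_trans[OF dist_path[of u v] dist_path[of v w]]] .

lemma dist_act: assumes "M \<in> SL2" shows "farey_dist (farey_act M v) (farey_act M w) = farey_dist v w"
proof -
  have "farey_dist (farey_act M v) (farey_act M w) \<le> farey_dist v w"
    using dist_le[OF fpath_act[OF assms dist_path]] .
  moreover have "farey_dist v w \<le> farey_dist (farey_act M v) (farey_act M w)"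
    using dist_le[OF fpath_act[OF minv_SL2[OF assms] dist_path[of "farey_act M v" "farey_act M w"]]] assms by simp
  ultimately show ?thesis by simp
qed


definition negv :: "fvert \<Rightarrow> bool" where "negv v \<longleftrightarrow> (\<exists>r. v = Some r \<and> r < 0)"
definition posv :: "fvert \<Rightarrow> bool" where "posv v \<longleftrightarrow> (\<exists>r. v = Some r \<and> r > 0)"

lemma fcoords_sign:
  assumes "fcoords (Some r) = (p,q)"
  shows "q > 0" "r < 0 \<longleftrightarrow> p < 0" "r > 0 \<longleftrightarrow> p > 0"
proof -
  have qr: "quotient_of r = (p,q)" using assms by (simp add: fcoords_def)
  show q: "q > 0" using quotient_of_denom_pos[OF qr] .
  have "r = Fract p q" using quotient_of_div[OF qr] by (simp add: Fract_of_int_quotient)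
  then show "r < 0 \<longleftrightarrow> p < 0" "r > 0 \<longleftrightarrow> p > 0" using q Fract_less_zero_iff zero_less_Fract_iff by auto
qed

lemma no_adj_negpos: assumes "negv v" "posv w" shows "\<not> farey_adj v w"
proof
  assume adj: "farey_adj v w"
  obtain r where r: "v = Some r" "r < 0" using assms(1) negv_def by auto
  obtain r' where r': "w = Some r'" "r' > 0" using assms(2) posv_def by auto
  obtain p q where pq: "fcoords (Some r) = (p,q)" by (cases "fcoords (Some r)")
  obtain p' q' where pq': "fcoords (Some r') = (p',q')" by (cases "fcoords (Some r')")
  have h: "q > 0" "p < 0" "q' > 0" "p' > 0" using fcoords_sign[OF pq] fcoords_sign[OF pq'] r r' by auto
  have "1*1 \<le> (-p) * q'" using h by (intro mult_mono) auto
  moreover have "1*1 \<le> q * p'" using h by (intro mult_mono) auto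
  ultimately have "p * q' - q * p' \<le> -2" by simp
  moreover have "\<bar>p * q' - q * p'\<bar> = 1" using adj r r' pq pq' by (simp add: farey_adj_def)
  ultimately show False by linarith
qed

lemma sep_path:
  assumes "fpath n v w" "negv v" "posv w"
  shows "\<exists>i\<le>n. \<exists>u. (u = None \<or> u = Some 0) \<and> fpath i v u \<and> fpath (n - i) u w"
proof -
  obtain p where p: "p 0 = v" "p n = w" "\<forall>i<n. farey_adj (p i) (p (Suc i))" using assms(1) fpath_def by auto
  have "\<exists>i\<le>n. p i = None \<or> p i = Some 0"
  proof (rule ccontr)
    assume H: "\<not> (\<exists>i\<le>n. p i = None \<or> p i = Some 0)"
    have "negv (p i)" if "i \<le> n" for i
      using that
    proof (induction i)
      case 0 then show ?case using p assms by simp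
    next
      case (Suc i)
      then have ni: "negv (p i)" by simp
      have adj: "farey_adj (p i) (p (Suc i))" using p(3) Suc.prems by simp
      obtain x where x: "p (Suc i) = Some x" "x \<noteq> 0" using H Suc.prems by (cases "p (Suc i)") auto
      show ?case
      proof (cases "x < 0")
        case True then show ?thesis using x by (simp add: negv_def)
      next
        case False
        then have "posv (p (Suc i))" using x by (simp add: posv_def)
        then show ?thesis using no_adj_negpos[OF ni] adj by blast
      qed
    qed
    then have "negv w" using p(2) by (metis order_refl)
    then show False using assms(3) by (auto simp: negv_def posv_def)
  qed
  then obtain i where i: "i \<le> n" "p i = None \<or> p i = Some 0" by blast
  have "fpath i v (p i)" unfolding fpath_def using p by (intro exI[of _ p]) (use i in auto)
  moreover have "fpath (n - i) (p i) w" unfolding fpath_def using p i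
    by (intro exI[of _ "\<lambda>k. p (i + k)"]) auto
  ultimately show ?thesis using i by blast
qed

lemma dist_sep:
  assumes "negv z" "posv y"
  shows "farey_dist z y = min (farey_dist z (Some 0) + farey_dist (Some 0) y) (farey_dist z None + farey_dist None y)"
proof -
  obtain i u where iu: "i \<le> farey_dist z y" "u = None \<or> u = Some 0" "fpath i z u" "fpath (farey_dist z y - i) u y"
    using sep_path[OF dist_path assms] by blast
  have "farey_dist z u + farey_dist u y \<le> farey_dist z y" using dist_le[OF iu(3)] dist_le[OF iu(4)] iu(1) by linarith
  then have "min (farey_dist z (Some 0) + farey_dist (Some 0) y) (farey_dist z None + farey_dist None y) \<le> farey_dist z y"
    using iu(2) by auto
  moreover have "farey_dist z y \<le> farey_dist z (Some 0) + farey_dist (Some 0) y" by (rule dist_tri)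
  moreover have "farey_dist z y \<le> farey_dist z None + farey_dist None y" by (rule dist_tri)
  ultimately show ?thesis by linarith
qed

fun posm :: "imat \<Rightarrow> bool" where "posm (a,b,c,d) \<longleftrightarrow> a > 0 \<and> b > 0 \<and> c > 0 \<and> d > 0"

lemma posm_mmul: "posm A \<Longrightarrow> posm B \<Longrightarrow> posm (mmul A B)"
  by (cases A; cases B) (simp add: add_pos_pos)

lemma fcoords_zero: "fcoords (Some 0) = (0,1)" by (simp add: fcoords_def)

lemma posv_act_None: "posm N \<Longrightarrow> posv (farey_act N None)"
  by (cases N) (simp add: posv_def fvert_of_def zero_less_Fract_iff)

lemma posv_act_zero: "posm N \<Longrightarrow> posv (farey_act N (Some 0))"
  by (cases N) (simp add: posv_def fvert_of_def zero_less_Fract_iff fcoords_zero)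

lemma negv_inv_None: assumes "posm N" shows "negv (farey_act (minv N) None)"
proof -
  obtain a b c d where N: "N = (a,b,c,d)" by (cases N)
  have "farey_act (minv N) None = fvert_of (d, -c)" by (simp add: N)
  also have "\<dots> = fvert_of (-d, c)" using fvert_of_neg[of "-d" c] by simp
  finally show ?thesis using assms by (simp add: N negv_def fvert_of_def Fract_less_zero_iff)
qed

lemma rec_step:
  assumes "posm N" "N \<in> SL2" "posv y"
  shows "farey_dist None (farey_act N y) =
     min (farey_dist None (farey_act N (Some 0)) + farey_dist (Some 0) y) (farey_dist None (farey_act N None) + farey_dist None y)"
proof -
  define z where "z = farey_act (minv N) None"
  have iS: "minv N \<in> SL2" using minv_SL2[OF assms(2)] .
  have "farey_dist None (farey_act N y) = farey_dist z y"
    using dist_act[OF iS, of None "farey_act N y"] assms(2) by (simp add: z_def)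
  also have "\<dots> = min (farey_dist z (Some 0) + farey_dist (Some 0) y) (farey_dist z None + farey_dist None y)"
    using dist_sep[OF _ assms(3)] negv_inv_None[OF assms(1)] by (simp add: z_def)
  also have "farey_dist z (Some 0) = farey_dist None (farey_act N (Some 0))"
    using dist_act[OF assms(2), of z "Some 0"] assms(2) by (simp add: z_def)
  also have "farey_dist z None = farey_dist None (farey_act N None)"
    using dist_act[OF assms(2), of z None] assms(2) by (simp add: z_def)
  finally show ?thesis .
qed

primrec mpow :: "imat \<Rightarrow> nat \<Rightarrow> imat" where
  "mpow M 0 = I2" | "mpow M (Suc n) = mmul M (mpow M n)"

lemma mpow_SL2: "M \<in> SL2 \<Longrightarrow> mpow M n \<in> SL2"
  by (induction n) (auto simp: I2_SL2 mmul_SL2)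

lemma mpow_Suc': "mpow M (Suc n) = mmul (mpow M n) M"
  by (induction n) (simp_all add: mmul_assoc[symmetric])

lemma mpow_pos: "posm M \<Longrightarrow> posm (mpow M (Suc n))"
  by (induction n) (auto simp: posm_mmul)

lemma act_pow: "M \<in> SL2 \<Longrightarrow> (farey_act M ^^ j) v = farey_act (mpow M j) v"
  by (induction j) (auto simp: farey_act_comp mpow_SL2)

definition xs :: "imat \<Rightarrow> nat \<Rightarrow> nat" where "xs M j = farey_dist None (farey_act (mpow M j) None)"
definition ys :: "imat \<Rightarrow> nat \<Rightarrow> nat" where "ys M j = farey_dist None (farey_act (mpow M j) (Some 0))"

lemma rec_xy:
  assumes "posm M" "M \<in> SL2" "j \<ge> 1"
  shows "xs M (Suc j) = min (ys M j + farey_dist (Some 0) (farey_act M None)) (xs M j + xs M 1)"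
        "ys M (Suc j) = min (ys M j + farey_dist (Some 0) (farey_act M (Some 0))) (xs M j + ys M 1)"
proof -
  obtain j' where j: "j = Suc j'" using assms(3) by (cases j) auto
  have P: "posm (mpow M j)" using mpow_pos[OF assms(1)] j by simp
  have S: "mpow M j \<in> SL2" using mpow_SL2[OF assms(2)] .
  have e: "farey_act (mpow M (Suc j)) v = farey_act (mpow M j) (farey_act M v)" for v
    unfolding mpow_Suc' by (rule farey_act_comp[OF assms(2), symmetric])
  have x1: "xs M 1 = farey_dist None (farey_act M None)" by (simp add: xs_def)
  have y1: "ys M 1 = farey_dist None (farey_act M (Some 0))" by (simp add: ys_def)
  show "xs M (Suc j) = min (ys M j + farey_dist (Some 0) (farey_act M None)) (xs M j + xs M 1)"
    unfolding xs_def e using rec_step[OF P S posv_act_None[OF assms(1)]] x1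
    by (simp add: xs_def ys_def)
  show "ys M (Suc j) = min (ys M j + farey_dist (Some 0) (farey_act M (Some 0))) (xs M j + ys M 1)"
    unfolding ys_def e using rec_step[OF P S posv_act_zero[OF assms(1)]] y1
    by (simp add: xs_def ys_def)
qed


lemma minplus_lower:
  fixes x y :: "nat \<Rightarrow> nat" and a11 a12 a21 a22 :: nat and mu :: real
  assumes rx: "\<And>j. j \<ge> 1 \<Longrightarrow> x (Suc j) = min (y j + a12) (x j + a11)"
      and ry: "\<And>j. j \<ge> 1 \<Longrightarrow> y (Suc j) = min (y j + a22) (x j + a21)"
      and mu: "mu \<le> a11" "mu \<le> a22" "2*mu \<le> a12 + a21" "mu \<ge> 0"
  shows "j \<ge> 1 \<Longrightarrow> real (x j) \<ge> j*mu - 2*mu \<and> real (y j) \<ge> j*mu - (mu + a12)"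
proof (induction j rule: dec_induct)
  case base then show ?case using mu(4) by simp
next
  case (step j)
  have X: "real (x (Suc j)) = min (real (y j) + a12) (real (x j) + a11)" using rx[OF step(1)] by simp
  have Y: "real (y (Suc j)) = min (real (y j) + a22) (real (x j) + a21)" using ry[OF step(1)] by simp
  show ?case using step(3) X Y mu by (simp add: algebra_simps min_def)
qed

lemma minplus_upper:
  fixes x y :: "nat \<Rightarrow> nat" and a11 a12 a21 a22 :: nat and mu :: real
  assumes rx: "\<And>j. j \<ge> 1 \<Longrightarrow> x (Suc j) = min (y j + a12) (x j + a11)"
      and ry: "\<And>j. j \<ge> 1 \<Longrightarrow> y (Suc j) = min (y j + a22) (x j + a21)"
      and mu: "mu = a11 \<or> mu = a22 \<or> 2*mu = a12 + a21"
  shows "\<exists>K. \<forall>j\<ge>1. real (x j) \<le> j*mu + K"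
proof -
  consider "mu = a11" | "mu = a22" | "2*mu = a12 + a21" using mu by blast
  then show ?thesis
  proof cases
    case 1
    have "j \<ge> 1 \<Longrightarrow> real (x j) \<le> j*mu + x 1" for j
    proof (induction j rule: dec_induct)
      case base then show ?case using 1 by simp
    next
      case (step j)
      have "real (x (Suc j)) \<le> real (x j) + a11" using rx[OF step(1)] by simp
      then show ?case using step(3) 1 by (simp add: algebra_simps)
    qed
    then show ?thesis by blast
  next
    case 2
    have Y: "j \<ge> 1 \<Longrightarrow> real (y j) \<le> j*mu + y 1" for j
    proof (induction j rule: dec_induct)
      case base then show ?case using 2 by simp
    next
      case (step j)
      have "real (y (Suc j)) \<le> real (y j) + a22" using ry[OF step(1)] by simp
      then show ?case using step(3) 2 by (simp add: algebra_simps)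
    qed
    have "real (x j) \<le> j*mu + (x 1 + y 1 + a12)" if j: "j \<ge> 1" for j
    proof (cases "j = 1")
      case True then show ?thesis using 2 by simp
    next
      case False
      then obtain i where i: "j = Suc i" "i \<ge> 1" using j by (cases j) auto
      have "real (x j) \<le> real (y i) + a12" using rx[OF i(2)] i(1) by simp
      also have "\<dots> \<le> i*mu + y 1 + a12" using Y[OF i(2)] by simp
      also have "real i * mu \<le> real j * mu" using i 2 by (simp add: mult_right_mono)
      then have "i*mu + y 1 + a12 \<le> j*mu + (x 1 + y 1 + a12)" by simp
      finally show ?thesis .
    qed
    then show ?thesis by blast
  next
    case 3
    have mu0: "mu \<ge> 0" using 3 by simp
    have two: "real (x (Suc (Suc j))) \<le> real (x j) + 2*mu" if "j \<ge> 1" for j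
    proof -
      have "real (x (Suc (Suc j))) \<le> real (y (Suc j)) + a12" using rx[of "Suc j"] that by simp
      also have "real (y (Suc j)) \<le> real (x j) + a21" using ry[OF that] by simp
      finally show ?thesis using 3 by simp
    qed
    have "real (x j) \<le> j*mu + (x 1 + x 2)" if "j \<ge> 1" for j
      using that
    proof (induction j rule: less_induct)
      case (less j)
      show ?case
      proof (cases "j \<le> 2")
        case True
        then have "j = 1 \<or> j = 2" using less.prems by auto
        then show ?thesis using mu0 by auto
      next
        case False
        then obtain i where i: "j = Suc (Suc i)" "i \<ge> 1" by (cases j; cases "j - 1") auto
        have "real (x j) \<le> real (x i) + 2*mu" using two[OF i(2)] i(1) by simp
        also have "\<dots> \<le> i*mu + (x 1 + x 2) + 2*mu" using less.IH[of i] i by simp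
        also have "\<dots> = j*mu + (x 1 + x 2)" using i by (simp add: algebra_simps)
        finally show ?thesis .
      qed
    qed
    then show ?thesis by blast
  qed
qed

lemma bounded_dev_tendsto:
  fixes z :: "nat \<Rightarrow> real" and mu K :: real
  assumes "\<forall>j\<ge>1. \<bar>z j - j*mu\<bar> \<le> K"
  shows "(\<lambda>j. z j / real j) \<longlonglongrightarrow> mu"
proof (rule tendsto_sandwich[of "\<lambda>j. mu - K / real j" _ _ "\<lambda>j. mu + K / real j"])
  show "\<forall>\<^sub>F j in sequentially. mu - K / real j \<le> z j / real j"
    using eventually_ge_at_top[of 1]
  proof eventually_elim
    case (elim j)
    then have h: "j*mu - K \<le> z j" using assms by force
    have "mu - K / real j = (real j * mu - K) / real j" using elim by (simp add: field_simps)
    also have "\<dots> \<le> z j / real j" using h by (intro divide_right_mono) auto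
    finally show ?case .
  qed
  show "\<forall>\<^sub>F j in sequentially. z j / real j \<le> mu + K / real j"
    using eventually_ge_at_top[of 1]
  proof eventually_elim
    case (elim j)
    then have h: "z j \<le> j*mu + K" using assms by force
    have "z j / real j \<le> (real j * mu + K) / real j" using h by (intro divide_right_mono) auto
    also have "\<dots> = mu + K / real j" using elim by (simp add: field_simps)
    finally show ?case .
  qed
  show "(\<lambda>j. mu - K / real j) \<longlonglongrightarrow> mu" using tendsto_diff[OF tendsto_const lim_const_over_n[of K]] by simp
  show "(\<lambda>j. mu + K / real j) \<longlonglongrightarrow> mu" using tendsto_add[OF tendsto_const lim_const_over_n[of K]] by simp
qed

lemma liminf_of_bounded_dev:
  fixes z :: "nat \<Rightarrow> nat" and mu K :: real
  assumes "\<forall>j\<ge>1. \<bar>real (z j) - j*mu\<bar> \<le> K"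
  shows "liminf (\<lambda>j::nat. ereal (real (z j) / real j)) = ereal mu"
  by (rule lim_imp_Liminf) (auto intro!: tendsto_ereal bounded_dev_tendsto[OF assms])


lemma act_mconj:
  assumes "g \<in> SL2" "M \<in> SL2"
  shows "farey_act (mconj g M) v = farey_act g (farey_act M (farey_act (minv g) v))"
  using assms by (simp add: mconj_def farey_act_comp minv_SL2 mmul_SL2 mmul_assoc)

lemma iter_conj:
  assumes "g \<in> SL2" "M \<in> SL2"
  shows "(farey_act (mconj g M) ^^ j) v = farey_act g ((farey_act M ^^ j) (farey_act (minv g) v))"
proof (induction j)
  case 0 then show ?case using assms by simp
next
  case (Suc j)
  then show ?case using assms by (simp add: act_mconj)
qed

lemma iter_mneg: "(farey_act (mneg M) ^^ j) v = (farey_act M ^^ j) v"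
  by (induction j) (simp_all add: farey_act_mneg)

lemma transl_conj_reduced:
  assumes P: "posm Mr" and S: "Mr \<in> SL2" and C: "M' \<in> psl_conjclass Mr"
  defines "A11 \<equiv> xs Mr 1" and "A12 \<equiv> farey_dist (Some 0) (farey_act Mr None)"
      and "A21 \<equiv> ys Mr 1" and "A22 \<equiv> farey_dist (Some 0) (farey_act Mr (Some 0))"
  shows "transl_len M' = ereal (min (min (real A11) (real A22)) ((real A12 + real A21)/2))"
proof -
  define mu where "mu = min (min (real A11) (real A22)) ((real A12 + real A21)/2)"
  have rx: "\<And>j. j \<ge> 1 \<Longrightarrow> xs Mr (Suc j) = min (ys Mr j + A12) (xs Mr j + A11)"
    using rec_xy(1)[OF P S] by (simp add: A12_def A11_def)
  have ry: "\<And>j. j \<ge> 1 \<Longrightarrow> ys Mr (Suc j) = min (ys Mr j + A22) (xs Mr j + A21)"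
    using rec_xy(2)[OF P S] by (simp add: A22_def A21_def)
  have m0a: "mu \<le> (real A12 + real A21)/2" unfolding mu_def by (rule min.cobounded2)
  have m0b: "mu \<le> min (real A11) (real A22)" unfolding mu_def by (rule min.cobounded1)
  have m0c: "mu \<ge> 0" by (simp add: mu_def)
  from m0a m0b m0c have m1: "mu \<le> A11" "mu \<le> A22" "2*mu \<le> real (A12 + A21)" "mu \<ge> 0" by simp_all
  have low: "\<forall>j\<ge>1. real (xs Mr j) \<ge> j*mu - 2*mu"
    using minplus_lower[of "xs Mr" "ys Mr" A12 A11 A22 A21 mu, OF rx ry m1] by blast
  obtain K where up: "\<forall>j\<ge>1. real (xs Mr j) \<le> j*mu + K"
    using minplus_upper[of "xs Mr" "ys Mr" A12 A11 A22 A21 mu, OF rx ry] unfolding mu_def min_def by fastforce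
  obtain g where g: "g \<in> SL2" "M' = mconj g Mr \<or> M' = mneg (mconj g Mr)"
    using C unfolding psl_conjclass_iff by blast
  define w where "w = farey_act (minv g) None"
  have gi: "minv g \<in> SL2" using minv_SL2[OF g(1)] .
  have it: "(farey_act M' ^^ j) None = farey_act g ((farey_act Mr ^^ j) w)" for j
  proof -
    have "(farey_act M' ^^ j) None = (farey_act (mconj g Mr) ^^ j) None"
      using g(2) iter_mneg[where M="mconj g Mr"] by auto
    then show ?thesis using iter_conj[OF g(1) S] by (simp add: w_def)
  qed
  define z where "z j = farey_dist None ((farey_act M' ^^ j) None)" for j
  define D where "D = farey_dist w None"
  have zj: "z j = farey_dist w (farey_act (mpow Mr j) w)" for j
  proof -
    have "z j = farey_dist None (farey_act g (farey_act (mpow Mr j) w))"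
      unfolding z_def it act_pow[OF S] ..
    also have "\<dots> = farey_dist (farey_act (minv g) None) (farey_act (minv g) (farey_act g (farey_act (mpow Mr j) w)))"
      using dist_act[OF gi] by simp
    also have "\<dots> = farey_dist w (farey_act (mpow Mr j) w)" using g(1) by (simp add: w_def)
    finally show ?thesis .
  qed
  have dev: "\<bar>real (z j) - real (xs Mr j)\<bar> \<le> 2 * D" for j
  proof -
    let ?P = "farey_act (mpow Mr j)"
    have PS: "mpow Mr j \<in> SL2" using mpow_SL2[OF S] .
    have e: "farey_dist (?P None) (?P w) = D" using dist_act[OF PS] dist_sym by (simp add: D_def)
    have "z j \<le> farey_dist w None + farey_dist None (?P w)" unfolding zj by (rule dist_tri)
    moreover have "farey_dist None (?P w) \<le> farey_dist None (?P None) + farey_dist (?P None) (?P w)" by (rule dist_tri)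
    moreover have "xs Mr j \<le> farey_dist None w + farey_dist w (?P None)" unfolding xs_def by (rule dist_tri)
    moreover have "farey_dist w (?P None) \<le> farey_dist w (?P w) + farey_dist (?P w) (?P None)" by (rule dist_tri)
    moreover have "farey_dist None w = D" "farey_dist (?P w) (?P None) = D" using e dist_sym D_def by metis+
    moreover have "farey_dist w None = D" by (simp add: D_def)
    ultimately have A: "z j \<le> xs Mr j + 2*D" and B: "xs Mr j \<le> z j + 2*D" using e unfolding zj xs_def by linarith+
    have A': "real (z j) \<le> real (xs Mr j) + 2 * real D" using A by (metis of_nat_le_iff of_nat_add of_nat_mult of_nat_numeral)
    have B': "real (xs Mr j) \<le> real (z j) + 2 * real D" using B by (metis of_nat_le_iff of_nat_add of_nat_mult of_nat_numeral)
    show ?thesis using A' B' by (simp add: abs_le_iff)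
  qed
  have "\<forall>j\<ge>1. \<bar>real (z j) - j*mu\<bar> \<le> max (2*mu) K + 2*D"
  proof (intro allI impI)
    fix j :: nat assume j: "j \<ge> 1"
    show "\<bar>real (z j) - j*mu\<bar> \<le> max (2*mu) K + 2*D" using low j up dev[of j] by (simp add: abs_le_iff) (smt (verit))
  qed
  then have "liminf (\<lambda>j::nat. ereal (real (z j) / real j)) = ereal mu" by (rule liminf_of_bounded_dev)
  then show ?thesis unfolding transl_len_def z_def mu_def .
qed


lemma transl_hyp:
  assumes "hyperbolic M"
  shows "\<exists>m::nat. transl_len M = ereal (real m / 2) \<and> (2::int)^(m div 2) \<le> 2 * \<bar>mtr M\<bar>^2"
proof -
  obtain a b c d where R: "(a,b,c,d) \<in> psl_conjclass M" "a > 0" "b > 0" "c > 0" "d > 0"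
     "a + d = \<bar>mtr M\<bar>" "a*d - b*c = 1" "c \<le> \<bar>mtr M\<bar>^2" "b \<le> \<bar>mtr M\<bar>^2"
    using reduce[OF assms] by blast
  define Mr where "Mr = (a,b,c,d)"
  have P: "posm Mr" using R by (simp add: Mr_def)
  have S: "Mr \<in> SL2" using R by (simp add: Mr_def SL2_def)
  have C: "M \<in> psl_conjclass Mr" using psl_sym R(1) by (simp add: Mr_def)
  define A11 where "A11 = xs Mr 1"
  define A12 where "A12 = farey_dist (Some 0) (farey_act Mr None)"
  define A21 where "A21 = ys Mr 1"
  define A22 where "A22 = farey_dist (Some 0) (farey_act Mr (Some 0))"
  define m where "m = min (min (2*A11) (2*A22)) (A12 + A21)"
  have T: "transl_len M = ereal (min (min (real A11) (real A22)) ((real A12 + real A21)/2))"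
    using transl_conj_reduced[OF P S C] by (simp add: A11_def A12_def A21_def A22_def)
  have E: "min (min (real A11) (real A22)) ((real A12 + real A21)/2) = real m / 2"
    by (simp add: m_def min_def)
  have T': "transl_len M = ereal (real m / 2)" by (simp only: T E)
  have md: "m div 2 \<le> A11" unfolding m_def by linarith
  have pr: "prim (a, c)" using prim_of_det[of b c d a] R(7) by (simp add: algebra_simps)
  have a1: "A11 = farey_dist None (fvert_of (a, c))" by (simp add: A11_def xs_def Mr_def)
  have c1: "nat c \<ge> 1" using R(4) by simp
  have "\<exists>n. fpath n None (fvert_of (a, int (nat c))) \<and> 2^n \<le> 2 * nat c"
    using log_path[OF c1, of a] pr R(4) by simp
  then obtain n where n: "fpath n None (fvert_of (a, c))" "2^n \<le> 2 * nat c"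
    using R(4) by auto
  have "A11 \<le> n" using dist_le[OF n(1)] R(4) a1 by simp
  then have "(2::nat)^(m div 2) \<le> 2^n" using md by (intro power_increasing) auto
  also have "\<dots> \<le> 2 * nat c" using n(2) .
  finally have "int ((2::nat)^(m div 2)) \<le> int (2 * nat c)" by (simp only: of_nat_le_iff)
  then have "(2::int)^(m div 2) \<le> 2 * c" using R(4) by simp
  also have "\<dots> \<le> 2 * \<bar>mtr M\<bar>^2" using R(8) by simp
  finally show ?thesis using T' by blast
qed


lemma Hyp_rep: "C \<in> Hyp \<Longrightarrow> \<exists>M0. hyperbolic M0 \<and> C = psl_conjclass M0"
  by (auto simp: Hyp_def)

definition rep :: "imat set \<Rightarrow> imat" where "rep C = (SOME X. X \<in> C)"

lemma rep_props:
  assumes "hyperbolic M0" "C = psl_conjclass M0"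
  shows "rep C \<in> C" "hyperbolic (rep C)" "\<bar>mtr (rep C)\<bar> = \<bar>mtr M0\<bar>"
proof -
  have "M0 \<in> C" using psl_refl[of M0] assms(2) by simp
  then show r: "rep C \<in> C" unfolding rep_def by (rule someI)
  show "hyperbolic (rep C)" using psl_hyp[OF assms(1)] r assms(2) by simp
  show "\<bar>mtr (rep C)\<bar> = \<bar>mtr M0\<bar>" using psl_tr r assms(2) by simp
qed

lemma cdilat_rep: "cdilat C = dilat (rep C)" by (simp add: cdilat_def rep_def)
lemma ctransl_rep: "ctransl C = transl_len (rep C)" by (simp add: ctransl_def rep_def)

lemma class_trace_bound:
  assumes "C \<in> Hyp" "cdilat C < R"
  shows "\<exists>M0. hyperbolic M0 \<and> C = psl_conjclass M0 \<and> real_of_int \<bar>mtr M0\<bar> < R + 1"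
proof -
  obtain M0 where M0: "hyperbolic M0" "C = psl_conjclass M0" using Hyp_rep[OF assms(1)] by blast
  have "real_of_int \<bar>mtr (rep C)\<bar> - 1 < dilat (rep C)" using dilat_bounds(1)[OF rep_props(2)[OF M0]] by simp
  then have "real_of_int \<bar>mtr M0\<bar> < R + 1" using assms(2) rep_props(3)[OF M0] cdilat_rep[of C] by simp
  then show ?thesis using M0 by blast
qed

definition HR :: "real \<Rightarrow> imat set set" where "HR R = {C \<in> Hyp. cdilat C < R}"

lemma finite_HR: "finite (HR R)"
proof -
  define B :: int where "B = \<lceil>R + 1\<rceil>^2"
  define Box where "Box = {0..B} \<times> {0..B} \<times> {0..B} \<times> {0..B}"
  have "HR R \<subseteq> psl_conjclass ` Box"
  proof
    fix C assume "C \<in> HR R"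
    then have C: "C \<in> Hyp" "cdilat C < R" by (auto simp: HR_def)
    obtain M0 where M0: "hyperbolic M0" "C = psl_conjclass M0" "real_of_int \<bar>mtr M0\<bar> < R + 1"
      using class_trace_bound[OF C] by blast
    obtain a b c d where R: "(a,b,c,d) \<in> psl_conjclass M0" "a > 0" "b > 0" "c > 0" "d > 0"
       "a + d = \<bar>mtr M0\<bar>" "a*d - b*c = 1" "c \<le> \<bar>mtr M0\<bar>^2" "b \<le> \<bar>mtr M0\<bar>^2"
      using reduce[OF M0(1)] by blast
    have t: "\<bar>mtr M0\<bar> \<le> \<lceil>R + 1\<rceil>" using M0(3) by linarith
    have "\<bar>mtr M0\<bar>^2 \<le> \<lceil>R + 1\<rceil>^2" using t by (intro power_mono) auto
    then have tb: "\<bar>mtr M0\<bar>^2 \<le> B" by (simp add: B_def)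
    have t1: "1 \<le> \<bar>mtr M0\<bar>" using R(6) R(2) R(5) by linarith
    have "\<bar>mtr M0\<bar> * 1 \<le> \<bar>mtr M0\<bar> * \<bar>mtr M0\<bar>" using t1 by (intro mult_left_mono) auto
    then have "\<bar>mtr M0\<bar> \<le> \<bar>mtr M0\<bar>^2" by (simp add: power2_eq_square)
    then have "a \<le> B" "d \<le> B" "b \<le> B" "c \<le> B" using R tb by linarith+
    then have "(a,b,c,d) \<in> Box" using R(2-5) unfolding Box_def by simp
    moreover have "C = psl_conjclass (a,b,c,d)" using psl_class_eq[OF R(1)] M0(2) by simp
    ultimately show "C \<in> psl_conjclass ` Box" by blast
  qed
  moreover have "finite Box" by (simp add: Box_def)
  ultimately show ?thesis using finite_subset by blast
qed


definition NB :: "real \<Rightarrow> nat" where "NB R = nat \<lceil>4 * log 2 (R+1)\<rceil> + 4"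

lemma ctransl_values:
  assumes "C \<in> HR R"
  shows "ctransl C \<in> (\<lambda>m. ereal (real m / 2)) ` {..<NB R}"
proof -
  have C: "C \<in> Hyp" "cdilat C < R" using assms by (auto simp: HR_def)
  obtain M0 where M0: "hyperbolic M0" "C = psl_conjclass M0" "real_of_int \<bar>mtr M0\<bar> < R + 1"
    using class_trace_bound[OF C] by blast
  define X where "X = rep C"
  have X: "hyperbolic X" "\<bar>mtr X\<bar> = \<bar>mtr M0\<bar>" using rep_props[OF M0(1,2)] by (auto simp: X_def)
  obtain m where m: "transl_len X = ereal (real m / 2)" "(2::int)^(m div 2) \<le> 2 * \<bar>mtr X\<bar>^2"
    using transl_hyp[OF X(1)] by blast
  define t where "t = real_of_int \<bar>mtr M0\<bar>"
  have t0: "t \<ge> 0" "t < R + 1" using M0(3) by (auto simp: t_def)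
  have R0: "R + 1 > 0" using t0 by linarith
  have "real_of_int ((2::int)^(m div 2)) \<le> real_of_int (2 * \<bar>mtr X\<bar>^2)" using m(2) by (simp only: of_int_le_iff)
  then have "2^(m div 2) \<le> 2 * t^2" using X(2) by (simp add: t_def)
  also have "t^2 \<le> (R+1)^2" using t0 by (intro power_mono) auto
  then have "2 * t^2 \<le> 2 * (R+1)^2" by simp
  finally have p: "2 powr real (m div 2) \<le> 2 * (R+1)^2" by (simp add: powr_realpow)
  have "real (m div 2) \<le> log 2 (2 * (R+1)^2)"
    using p R0 by (subst le_log_iff) auto
  also have "log 2 (2 * (R+1)^2) = 1 + 2 * log 2 (R+1)"
    using R0 by (simp add: log_mult log_nat_power)
  finally have q: "real (m div 2) \<le> 1 + 2 * log 2 (R+1)" .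
  have "m \<le> 2 * (m div 2) + 1" by linarith
  then have "real m \<le> 2 * real (m div 2) + 1" by linarith
  then have "real m \<le> 3 + 4 * log 2 (R+1)" using q by linarith
  also have "4 * log 2 (R+1) \<le> real_of_int \<lceil>4 * log 2 (R+1)\<rceil>" by (rule le_of_int_ceiling)
  finally have "real m < real_of_int \<lceil>4 * log 2 (R+1)\<rceil> + 4" by linarith
  then have "m < NB R" unfolding NB_def by linarith
  moreover have "ctransl C = ereal (real m / 2)" using m(1) by (simp add: ctransl_rep X_def)
  ultimately show ?thesis by blast
qed

lemma NB_bound: "R \<ge> 0 \<Longrightarrow> real (NB R) \<le> 5 + 4 * log 2 (R+1)"
proof -
  assume R: "R \<ge> 0"
  have "log 2 (R+1) \<ge> 0" using R by simp
  then show ?thesis unfolding NB_def by linarith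
qed

lemma card_bad:
  fixes k :: nat
  shows "card {C \<in> HR R. mcount C R < k} \<le> (k - 1) * NB R"
proof -
  define Bad where "Bad = {C \<in> HR R. mcount C R < k}"
  have fB: "finite Bad" using finite_HR[of R] by (simp add: Bad_def)
  have Bu: "Bad = (\<Union>v\<in>ctransl ` Bad. {C \<in> Bad. ctransl C = v})" by auto
  have each: "card {C \<in> Bad. ctransl C = v} \<le> k - 1" if vv: "v \<in> ctransl ` Bad" for v
  proof -
    obtain C0 where C0: "C0 \<in> Bad" "ctransl C0 = v" using vv by blast
    have sub: "{C \<in> Bad. ctransl C = v} \<subseteq> {C' \<in> Hyp. cdilat C' < R \<and> ctransl C' = ctransl C0}"
      using C0 by (auto simp: Bad_def HR_def)
    have fin: "finite {C' \<in> Hyp. cdilat C' < R \<and> ctransl C' = ctransl C0}"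
      using finite_HR[of R] by (rule finite_subset[rotated]) (auto simp: HR_def)
    have "card {C \<in> Bad. ctransl C = v} \<le> mcount C0 R" unfolding mcount_def using card_mono[OF fin sub] .
    also have "mcount C0 R < k" using C0 by (simp add: Bad_def)
    finally show ?thesis by linarith
  qed
  have "card Bad \<le> (\<Sum>v\<in>ctransl ` Bad. card {C \<in> Bad. ctransl C = v})"
    by (subst Bu) (rule card_UN_le, simp add: fB)
  also have "\<dots> \<le> (\<Sum>v\<in>ctransl ` Bad. k - 1)" by (rule sum_mono) (rule each)
  also have "\<dots> = (k - 1) * card (ctransl ` Bad)" by simp
  also have "card (ctransl ` Bad) \<le> card ((\<lambda>m. ereal (real m / 2)) ` {..<NB R})"
    by (rule card_mono) (use ctransl_values in \<open>auto simp: Bad_def\<close>)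
  also have "\<dots> \<le> NB R" using card_image_le[of "{..<NB R}"] by simp
  finally show ?thesis unfolding Bad_def by (simp add: mult_le_mono2)
qed

lemma card_HR_lower: "card (HR R) \<ge> nat (\<lfloor>R\<rfloor> - 2)"
proof -
  define f where "f t = psl_conjclass (t, -1, 1, 0)" for t :: int
  have hyp: "hyperbolic (t, -1, 1, 0)" if "t \<ge> 3" for t :: int
    using that by (simp add: hyperbolic_def SL2_def)
  have "f ` {3..\<lfloor>R\<rfloor>} \<subseteq> HR R"
  proof
    fix C assume "C \<in> f ` {3..\<lfloor>R\<rfloor>}"
    then obtain t where t: "t \<in> {3..\<lfloor>R\<rfloor>}" "C = f t" by blast
    have h: "hyperbolic (t,-1,1,0)" using hyp t by simp
    have CH: "C \<in> Hyp" using h t by (auto simp: Hyp_def f_def)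
    have "dilat (rep C) < real_of_int \<bar>mtr (rep C)\<bar>"
      using dilat_bounds(2)[OF rep_props(2)[OF h]] t(2) by (simp add: f_def)
    also have "\<bar>mtr (rep C)\<bar> = t" using rep_props(3)[OF h] t by (simp add: f_def)
    also have "real_of_int t \<le> R" using t(1) le_floor_iff by auto
    finally show "C \<in> HR R" using CH by (simp add: HR_def cdilat_rep)
  qed
  moreover have "inj_on f {3..\<lfloor>R\<rfloor>}"
  proof
    fix t t' assume tt: "t \<in> {3..\<lfloor>R\<rfloor>}" "t' \<in> {3..\<lfloor>R\<rfloor>}" "f t = f t'"
    have "(t,-1,1,0) \<in> f t'" using tt(3) psl_refl by (simp add: f_def) (metis psl_refl)
    then have "\<bar>t\<bar> = \<bar>t'\<bar>" using psl_tr unfolding f_def by fastforce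
    then show "t = t'" using tt by auto
  qed
  ultimately have "card {3..\<lfloor>R\<rfloor>} \<le> card (HR R)"
    using card_inj_on_le[of f _ "HR R"] finite_HR by blast
  then show ?thesis by simp
qed


theorem mainTheorem16:
  fixes k :: nat
  assumes "k \<ge> 1"
  shows "((\<lambda>R::real. real (card {C \<in> Hyp. cdilat C < R \<and> mcount C R \<ge> k})
                     / real (card {C \<in> Hyp. cdilat C < R})) \<longlongrightarrow> 1) at_top"
proof -
  define U where "U R = real (k - 1) * (5 + 4 * log 2 (R+1)) / (R - 3)" for R :: real
  have eq: "real (card {C \<in> Hyp. cdilat C < R \<and> mcount C R \<ge> k}) / real (card {C \<in> Hyp. cdilat C < R})
      = 1 - real (card {C \<in> HR R. mcount C R < k}) / real (card (HR R))" if R: "R \<ge> 4" for R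
  proof -
    have G: "{C \<in> Hyp. cdilat C < R \<and> mcount C R \<ge> k} = HR R - {C \<in> HR R. mcount C R < k}"
      by (auto simp: HR_def)
    have f: "finite (HR R)" by (rule finite_HR)
    have c: "card {C \<in> Hyp. cdilat C < R \<and> mcount C R \<ge> k} = card (HR R) - card {C \<in> HR R. mcount C R < k}"
      unfolding G by (rule card_Diff_subset) (use f in auto)
    have le: "card {C \<in> HR R. mcount C R < k} \<le> card (HR R)" using f by (intro card_mono) auto
    have "real (nat (\<lfloor>R\<rfloor> - 2)) \<le> real (card (HR R))" using card_HR_lower[of R] by linarith
    moreover have "real (nat (\<lfloor>R\<rfloor> - 2)) \<ge> 1" using R by linarith
    ultimately have pos: "real (card (HR R)) > 0" by linarith
    show ?thesis unfolding c HR_def[symmetric] using le pos by (simp add: of_nat_diff field_simps)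
  qed
  have bound: "real (card {C \<in> HR R. mcount C R < k}) / real (card (HR R)) \<le> U R" if R: "R \<ge> 4" for R
  proof -
    have "real (nat (\<lfloor>R\<rfloor> - 2)) \<le> real (card (HR R))" using card_HR_lower[of R] by linarith
    moreover have "real (nat (\<lfloor>R\<rfloor> - 2)) \<ge> R - 3" using R by linarith
    ultimately have h: "real (card (HR R)) \<ge> R - 3" by linarith
    have "real (card {C \<in> HR R. mcount C R < k}) \<le> real ((k - 1) * NB R)"
      by (simp only: of_nat_le_iff) (rule card_bad)
    also have "\<dots> = real (k - 1) * real (NB R)" by (rule of_nat_mult)
    also have "\<dots> \<le> real (k - 1) * (5 + 4 * log 2 (R+1))"
      using NB_bound[of R] R by (intro mult_left_mono) auto
    finally have n: "real (card {C \<in> HR R. mcount C R < k}) \<le> real (k - 1) * (5 + 4 * log 2 (R+1))" .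
    have "real (card {C \<in> HR R. mcount C R < k}) / real (card (HR R))
        \<le> real (card {C \<in> HR R. mcount C R < k}) / (R - 3)"
      using h R by (intro divide_left_mono) auto
    also have "\<dots> \<le> U R" unfolding U_def using n R by (intro divide_right_mono) auto
    finally show ?thesis .
  qed
  have lim: "((\<lambda>R. 1 - U R) \<longlongrightarrow> 1) at_top" unfolding U_def by real_asymp
  show ?thesis
  proof (rule tendsto_sandwich[OF _ _ lim tendsto_const])
    show "\<forall>\<^sub>F R in at_top. 1 - U R \<le> real (card {C \<in> Hyp. cdilat C < R \<and> mcount C R \<ge> k}) / real (card {C \<in> Hyp. cdilat C < R})"
      using eventually_ge_at_top[of "4::real"]
    proof eventually_elim
      case (elim R) then show ?case using eq[OF elim] bound[OF elim] by simp
    qed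
    show "\<forall>\<^sub>F R in at_top. real (card {C \<in> Hyp. cdilat C < R \<and> mcount C R \<ge> k}) / real (card {C \<in> Hyp. cdilat C < R}) \<le> 1"
      using eventually_ge_at_top[of "4::real"]
    proof eventually_elim
      case (elim R) then show ?case using eq[OF elim] by simp
    qed
  qed
qed


end
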